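(* Let $r\in\mathbb Z_+$ be even, $\Gamma=\Gamma_{(r,r)}$, and $E\in\mathcal C_\Gamma\setminus\{-4,0,4\}$ with $E<0$. Let $\ell\ge1$ be maximal with $\lambda_\ell^\Gamma(0,0)<E$, and let $m\ge0$ be maximal with $\lambda_m^\Gamma(\pi,\pi)<E$ (with the convention $\lambda_0^\Gamma(\pi,\pi)=-\infty$). Then there exist $(\theta_1,\varphi_1),(\theta_2,\varphi_2)\in[0,\pi]^2$ and integers $n_1,n_2\ge0$ such that $\lambda^\Gamma_{\ell+2n_1}(\theta_1,\varphi_1)<E<\lambda^\Gamma_{\ell+2n_1+1}(\theta_1,\varphi_1)$ and $\lambda^\Gamma_{m+2n_2}(\theta_2,\varphi_2)<E<\lambda^\Gamma_{m+2n_2+1}(\theta_2,\varphi_2)$.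
   Context: For $r\ge3$ and $\theta\in\mathbb R$, $\Delta_\theta^r\in\mathbb C^{r\times r}$ is the Hermitian matrix with $1$ on the sub- and superdiagonals, $0$ on the diagonal, entry $e^{-i\theta}$ in position $(1,r)$ and $e^{i\theta}$ in position $(r,1)$, all other entries $0$; $\Delta_\theta^2=\begin{bmatrix}0&1+e^{-i\theta}\\1+e^{i\theta}&0\end{bmatrix}$. $\Gamma=\Gamma_{(r,r)}$, $\Delta^\Gamma_{\theta,\varphi}=\Delta_\theta^r\otimes I_r+I_r\otimes\Delta_\varphi^r$, with eigenvalues $\lambda_1^\Gamma(\theta,\varphi)\le\cdots\le\lambda_{r^2}^\Gamma(\theta,\varphi)$ counted with multiplicity (and $\lambda_0^\Gamma:=-\infty$). $\mathcal C_r=\{2\cos(\pi j/r): j\in\mathbb Z,\ 0\le j\le r\}$ and $\mathcal C_\Gamma=\{a+b:a,b\in\mathcal C_r\}$. *)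

theory Defs
  imports "HOL-Analysis.Analysis" "Jordan_Normal_Form.Char_Poly" "HOL-Library.Extended_Real"
begin

definition Delta :: "nat \<Rightarrow> real \<Rightarrow> complex mat" where
  "Delta r \<theta> = mat r r (\<lambda>(i,j).
     if r = 2 then
       (if i = 0 \<and> j = 1 then 1 + exp (- \<i> * of_real \<theta>)
        else if i = 1 \<and> j = 0 then 1 + exp (\<i> * of_real \<theta>) else 0)
     else
       (if i + 1 = j \<or> j + 1 = i then 1
        else if i = 0 \<and> j = r - 1 then exp (- \<i> * of_real \<theta>)
        else if i = r - 1 \<and> j = 0 then exp (\<i> * of_real \<theta>) else 0))"

definition kron :: "complex mat \<Rightarrow> complex mat \<Rightarrow> complex mat" where
  "kron A B = mat (dim_row A * dim_row B) (dim_col A * dim_col B) (\<lambda>(i,j).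
     A $$ (i div dim_row B, j div dim_col B) * B $$ (i mod dim_row B, j mod dim_col B))"

definition DeltaGamma :: "nat \<Rightarrow> real \<Rightarrow> real \<Rightarrow> complex mat" where
  "DeltaGamma r \<theta> \<phi> = kron (Delta r \<theta>) (1\<^sub>m r) + kron (1\<^sub>m r) (Delta r \<phi>)"

text \<open>Eigenvalues (counted with multiplicity, as roots of the characteristic polynomial),
  real parts (the matrix is Hermitian), sorted increasingly.\<close>
definition eigs_sorted :: "complex mat \<Rightarrow> real list" where
  "eigs_sorted A = sorted_list_of_multiset (image_mset Re (proots (char_poly A)))"

definition lamG :: "nat \<Rightarrow> nat \<Rightarrow> real \<Rightarrow> real \<Rightarrow> ereal" where
  "lamG r k \<theta> \<phi> = (if k = 0 then -\<infinity> else ereal (eigs_sorted (DeltaGamma r \<theta> \<phi>) ! (k - 1)))"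

definition C_r :: "nat \<Rightarrow> real set" where
  "C_r r = {2 * cos (pi * real j / real r) | j. j \<le> r}"

definition C_Gamma :: "nat \<Rightarrow> real set" where
  "C_Gamma r = {a + b | a b. a \<in> C_r r \<and> b \<in> C_r r}"

end

theory Submission
  imports Defs
begin


definition al :: "nat \<Rightarrow> real \<Rightarrow> nat \<Rightarrow> real" where
  "al r \<theta> p = (\<theta> + 2 * pi * real p) / real r"
definition ev :: "nat \<Rightarrow> real \<Rightarrow> nat \<Rightarrow> real" where
  "ev r \<theta> p = 2 * cos (al r \<theta> p)"

lemma cis_pow: "cis x ^ n = cis (real n * x)"
  by (induction n) (auto simp: cis_mult algebra_simps)

lemma cis_pm: "cis x + cis (- x) = complex_of_real (2 * cos x)"
  by (simp add: complex_eq_iff)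

lemma cis_nat_2pi: "cis (y + 2 * pi * real (p::nat)) = cis y"
proof -
  have "cis (y + 2 * pi * real p) = cis y * cis (2 * pi * real p)" by (rule cis_mult[symmetric])
  also have "cis (2 * pi * real p) = 1" by (rule cis_multiple_2pi) simp
  finally show ?thesis by simp
qed

lemma cis_ra: assumes "r > 0" shows "cis (real r * al r \<theta> p) = cis \<theta>"
  using assms cis_nat_2pi[of \<theta> p] by (simp add: al_def)

lemma exp_cis: "exp (\<i> * complex_of_real t) = cis t" "exp (- \<i> * complex_of_real t) = cis (- t)"
  by (simp_all add: cis_conv_exp)

lemma sum_two_pts:
  assumes "x \<in> A" "y \<in> A" "x \<noteq> y" "finite A"
  shows "(\<Sum>b\<in>A. (if b = x then f b else 0) + (if b = y then g b else 0)) = f x + (g y :: complex)"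
  using assms by (simp add: sum.distrib)

lemma Delta2:
  "Delta 2 \<theta> $$ (0,0) = 0" "Delta 2 \<theta> $$ (0,1) = 1 + cis (-\<theta>)"
  "Delta 2 \<theta> $$ (1,0) = 1 + cis \<theta>" "Delta 2 \<theta> $$ (1,1) = 0"
  "Delta 2 \<theta> $$ (0,Suc 0) = 1 + cis (-\<theta>)"
  "Delta 2 \<theta> $$ (Suc 0,0) = 1 + cis \<theta>" "Delta 2 \<theta> $$ (Suc 0,Suc 0) = 0"
  by (simp_all add: Delta_def cis_conv_exp)

lemma Delta3:
  assumes "r \<ge> 3" "i < r" "j < r"
  shows "Delta r \<theta> $$ (i,j) = (if i + 1 = j \<or> j + 1 = i then 1
        else if i = 0 \<and> j = r - 1 then cis (-\<theta>)
        else if i = r - 1 \<and> j = 0 then cis \<theta> else 0)"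
  using assms by (simp add: Delta_def cis_conv_exp)

lemma Delta_eig:
  assumes r: "r \<ge> 2" and a: "a < r"
  shows "(\<Sum>b<r. Delta r \<theta> $$ (a,b) * cis (real b * al r \<theta> p))
       = complex_of_real (ev r \<theta> p) * cis (real a * al r \<theta> p)"
proof -
  define x where "x = al r \<theta> p"
  have rx: "cis (real r * x) = cis \<theta>" unfolding x_def by (rule cis_ra) (use r in auto)
  have ev: "complex_of_real (ev r \<theta> p) = cis x + cis (- x)" by (simp add: ev_def x_def cis_pm)
  show ?thesis
  proof (cases "r = 2")
    case True
    have "\<theta> = 2 * x - 2 * pi * real p" using True by (simp add: x_def al_def field_simps)
    hence th: "cis \<theta> = cis (2*x)" "cis (-\<theta>) = cis (-2*x)"
      using cis_nat_2pi[of "2*x - 2 * pi * real p" p] cis_nat_2pi[of "-2*x" p] by auto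
    have s2: "{..<2::nat} = {0,1}" by auto
    have "(\<Sum>b<r. Delta r \<theta> $$ (a,b) * cis (real b * x)) = Delta 2 \<theta> $$ (a,0) + Delta 2 \<theta> $$ (a,1) * cis x"
      unfolding True s2 by simp
    also have "\<dots> = (cis x + cis (- x)) * cis (real a * x)"
    proof (cases "a = 0")
      case True
      thus ?thesis by (simp add: Delta2 th distrib_right cis_mult)
    next
      case False
      hence "a = 1" using a \<open>r = 2\<close> by auto
      thus ?thesis by (simp add: Delta2 th distrib_right distrib_left cis_mult)
    qed
    finally show ?thesis by (simp add: ev x_def)
  next
    case False
    hence r3: "r \<ge> 3" using r by auto
    have thx: "cis (-\<theta>) = cis (- (real r * x))" using rx by (metis cis_cnj)
    have m1: "cis x * cis (real k * x) = cis ((real k + 1) * x)" for k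
      by (simp add: cis_mult algebra_simps)
    have m2: "cis (-x) * cis (real k * x) = cis ((real k - 1) * x)" for k
      by (simp add: cis_mult algebra_simps)
    have fin: "finite {..<r}" by simp
    have "(\<Sum>b<r. Delta r \<theta> $$ (a,b) * cis (real b * x)) = (cis x + cis (- x)) * cis (real a * x)"
    proof (cases "a = 0")
      case a0: True
      have "(\<Sum>b<r. Delta r \<theta> $$ (a,b) * cis (real b * x)) =
          (\<Sum>b<r. (if b = 1 then cis (real b * x) else 0) + (if b = r - 1 then cis (-\<theta>) * cis (real b * x) else 0))"
        by (rule sum.cong) (use a0 r3 in \<open>auto simp: Delta3\<close>)
      also have "\<dots> = cis (real 1 * x) + cis (-\<theta>) * cis (real (r - 1) * x)"
        by (rule sum_two_pts) (use r3 in auto)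
      also have "\<dots> = cis x + cis (-x)" using r3 by (simp add: thx cis_mult of_nat_diff algebra_simps)
      finally show ?thesis using a0 by simp
    next
      case an0: False
      show ?thesis
      proof (cases "a = r - 1")
        case ar: True
        have "(\<Sum>b<r. Delta r \<theta> $$ (a,b) * cis (real b * x)) =
            (\<Sum>b<r. (if b = r - 2 then cis (real b * x) else 0) + (if b = 0 then cis \<theta> * cis (real b * x) else 0))"
          by (rule sum.cong) (use ar r3 in \<open>auto simp: Delta3\<close>)
        also have "\<dots> = cis (real (r - 2) * x) + cis \<theta> * cis (real 0 * x)"
          by (rule sum_two_pts) (use r3 in auto)
        also have "\<dots> = (cis x + cis (- x)) * cis (real a * x)"
          using r3 ar by (simp add: rx[symmetric] distrib_right of_nat_diff cis_mult algebra_simps)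
        finally show ?thesis .
      next
        case anr: False
        have "(\<Sum>b<r. Delta r \<theta> $$ (a,b) * cis (real b * x)) =
            (\<Sum>b<r. (if b = a + 1 then cis (real b * x) else 0) + (if b = a - 1 then cis (real b * x) else 0))"
          by (rule sum.cong) (use an0 anr a r3 in \<open>auto simp: Delta3\<close>)
        also have "\<dots> = cis (real (a + 1) * x) + cis (real (a - 1) * x)"
          by (rule sum_two_pts) (use an0 anr a r3 in auto)
        also have "\<dots> = (cis x + cis (- x)) * cis (real a * x)"
          using an0 by (simp add: distrib_right m1 m2 of_nat_diff add.commute)
        finally show ?thesis .
      qed
    qed
    thus ?thesis by (simp add: ev x_def)
  qed
qed

lemma sum_divmod:
  fixes f :: "nat \<Rightarrow> nat \<Rightarrow> 'a::comm_monoid_add"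
  shows "(\<Sum>l<r*r. f (l div r) (l mod r)) = (\<Sum>a<r. \<Sum>b<r. f a b)"
proof (cases "r = 0")
  case True thus ?thesis by simp
next
  case False
  hence r: "r > 0" by simp
  have img: "{..<r*r} = (\<lambda>(a,b). a*r+b) ` ({..<r}\<times>{..<r})"
  proof
    show "{..<r*r} \<subseteq> (\<lambda>(a,b). a*r+b) ` ({..<r}\<times>{..<r})"
    proof
      fix l assume l: "l \<in> {..<r*r}"
      have "l = (\<lambda>(a,b). a*r+b) (l div r, l mod r)" by simp
      moreover have "(l div r, l mod r) \<in> {..<r}\<times>{..<r}"
        using l r by (auto simp: less_mult_imp_div_less)
      ultimately show "l \<in> (\<lambda>(a,b). a*r+b) ` ({..<r}\<times>{..<r})" by blast
    qed
  next
    show "(\<lambda>(a,b). a*r+b) ` ({..<r}\<times>{..<r}) \<subseteq> {..<r*r}"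
    proof safe
      fix a b assume "a < r" "b < r"
      hence "a * r + b < a * r + r" by simp
      also have "\<dots> = (a+1)*r" by simp
      also have "\<dots> \<le> r * r" using \<open>a < r\<close> by (metis Suc_eq_plus1 Suc_leI mult_le_mono1)
      finally show "a * r + b < r * r" .
    qed
  qed
  have inj: "inj_on (\<lambda>(a,b). a*r+b) ({..<r}\<times>{..<r})"
  proof (rule inj_onI, clarsimp)
    fix a b a' b' assume "b < r" "b' < r" "a * r + b = a' * r + b'"
    hence "(a * r + b) div r = (a' * r + b') div r" "(a * r + b) mod r = (a' * r + b') mod r" by auto
    thus "a = a' \<and> b = b'" using \<open>b < r\<close> \<open>b' < r\<close> by simp
  qed
  have "(\<Sum>l<r*r. f (l div r) (l mod r)) = (\<Sum>(a,b)\<in>{..<r}\<times>{..<r}. f ((a*r+b) div r) ((a*r+b) mod r))"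
    unfolding img by (subst sum.reindex[OF inj]) (simp add: case_prod_beta)
  also have "\<dots> = (\<Sum>(a,b)\<in>{..<r}\<times>{..<r}. f a b)"
    by (rule sum.cong) auto
  also have "\<dots> = (\<Sum>a<r. \<Sum>b<r. f a b)" by (simp add: sum.cartesian_product)
  finally show ?thesis .
qed

lemma al_diff: "r > 0 \<Longrightarrow> al r \<theta> q - al r \<theta> p = 2 * pi * (real q - real p) / real r"
  by (simp add: al_def field_simps)

lemma dft_sum:
  assumes "p < r" "q < r"
  shows "(\<Sum>a<r. cis (real a * (al r \<theta> q - al r \<theta> p))) = (if p = q then of_nat r else 0)"
proof (cases "p = q")
  case True thus ?thesis by simp
next
  case False
  have r: "r > 0" using assms by simp
  define z where "z = cis (2 * pi * (real q - real p) / real r)"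
  have eq1: "(\<Sum>a<r. cis (real a * (al r \<theta> q - al r \<theta> p))) = (\<Sum>a<r. z ^ a)"
    by (simp add: al_diff[OF r] z_def cis_pow)
  have "z \<noteq> 1"
  proof
    assume "z = 1"
    hence "cos (2 * pi * (real q - real p) / real r) = 1" unfolding z_def
      by (metis Re_complex_of_real cis.sel(1) complex_of_real_def one_complex.sel(1))
    then obtain k :: int where k: "2 * pi * (real q - real p) / real r = real_of_int k * 2 * pi"
      by (auto simp: cos_one_2pi_int)
    hence "pi * (real q - real p) = pi * (real_of_int k * real r)" using r by (simp add: field_simps)
    hence "real q - real p = real_of_int k * real r" by simp
    hence k2: "int q - int p = k * int r" by (metis of_int_eq_iff of_int_mult of_int_of_nat_eq of_int_diff)
    show False
    proof (cases "k = 0")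
      case True thus False using k2 False by simp
    next
      case kn: False
      hence "\<bar>k\<bar> \<ge> 1" by simp
      hence "\<bar>k * int r\<bar> \<ge> int r" by (simp add: abs_mult mult_le_cancel_right1)
      moreover have "\<bar>int q - int p\<bar> < int r" using assms by auto
      ultimately show False using k2 by simp
    qed
  qed
  moreover have "z ^ r = 1"
  proof -
    have e: "real r * (2 * pi * (real q - real p) / real r) = 2 * pi * (real q - real p)" using r by simp
    have "(real q - real p) \<in> \<int>" by (intro Ints_diff Ints_of_nat)
    hence "cis (2 * pi * (real q - real p)) = 1" by (rule cis_multiple_2pi)
    thus ?thesis unfolding z_def cis_pow e .
  qed
  ultimately have "(\<Sum>a<r. z ^ a) = 0" by (simp add: sum_gp_strict)
  thus ?thesis using False eq1 by simp
qed

definition PP :: "nat \<Rightarrow> real \<Rightarrow> real \<Rightarrow> complex mat" where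
  "PP r \<theta> \<phi> = mat (r*r) (r*r) (\<lambda>(i,j). cis (real (i div r) * al r \<theta> (j div r)) * cis (real (i mod r) * al r \<phi> (j mod r)))"
definition QQ :: "nat \<Rightarrow> real \<Rightarrow> real \<Rightarrow> complex mat" where
  "QQ r \<theta> \<phi> = mat (r*r) (r*r) (\<lambda>(i,j). cis (- (real (j div r) * al r \<theta> (i div r))) * cis (- (real (j mod r) * al r \<phi> (i mod r))) / of_nat (r*r))"
definition gg :: "nat \<Rightarrow> real \<Rightarrow> real \<Rightarrow> nat \<Rightarrow> real" where
  "gg r \<theta> \<phi> i = ev r \<theta> (i div r) + ev r \<phi> (i mod r)"
definition DD :: "nat \<Rightarrow> real \<Rightarrow> real \<Rightarrow> complex mat" where
  "DD r \<theta> \<phi> = mat (r*r) (r*r) (\<lambda>(i,j). if i = j then complex_of_real (gg r \<theta> \<phi> i) else 0)"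

lemma mult_entry:
  assumes "A \<in> carrier_mat n n" "B \<in> carrier_mat n n" "i < n" "j < n"
  shows "(A * B) $$ (i,j) = (\<Sum>l<n. A $$ (i,l) * B $$ (l,j))"
  using assms by (simp add: scalar_prod_def atLeast0LessThan)

lemma divr: "(i::nat) < r * r \<Longrightarrow> i div r < r" by (simp add: less_mult_imp_div_less)
lemma modr: "(i::nat) < r * r \<Longrightarrow> i mod r < r" by (cases "r = 0") auto

lemma QP: assumes r: "r > 0" shows "QQ r \<theta> \<phi> * PP r \<theta> \<phi> = 1\<^sub>m (r*r)"
proof (rule eq_matI)
  fix i j assume "i < dim_row (1\<^sub>m (r*r) :: complex mat)" "j < dim_col (1\<^sub>m (r*r) :: complex mat)"
  hence i: "i < r*r" and j: "j < r*r" by auto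
  have "(QQ r \<theta> \<phi> * PP r \<theta> \<phi>) $$ (i,j) = (\<Sum>l<r*r. QQ r \<theta> \<phi> $$ (i,l) * PP r \<theta> \<phi> $$ (l,j))"
    by (rule mult_entry) (use i j in \<open>auto simp: QQ_def PP_def\<close>)
  also have "\<dots> = (\<Sum>l<r*r. (cis (real (l div r) * (al r \<theta> (j div r) - al r \<theta> (i div r))) *
       cis (real (l mod r) * (al r \<phi> (j mod r) - al r \<phi> (i mod r)))) / of_nat (r*r))"
  proof (rule sum.cong)
    fix l assume "l \<in> {..<r*r}"
    hence l: "l < r * r" by simp
    show "QQ r \<theta> \<phi> $$ (i,l) * PP r \<theta> \<phi> $$ (l,j) = (cis (real (l div r) * (al r \<theta> (j div r) - al r \<theta> (i div r))) *
       cis (real (l mod r) * (al r \<phi> (j mod r) - al r \<phi> (i mod r)))) / of_nat (r*r)"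
      using i j l by (simp add: QQ_def PP_def cis_mult algebra_simps)
  qed simp
  also have "\<dots> = (\<Sum>a<r. \<Sum>b<r. (cis (real a * (al r \<theta> (j div r) - al r \<theta> (i div r))) *
       cis (real b * (al r \<phi> (j mod r) - al r \<phi> (i mod r)))) / of_nat (r*r))"
    by (rule sum_divmod)
  also have "\<dots> = (\<Sum>a<r. cis (real a * (al r \<theta> (j div r) - al r \<theta> (i div r)))) *
       (\<Sum>b<r. cis (real b * (al r \<phi> (j mod r) - al r \<phi> (i mod r)))) / of_nat (r*r)"
    by (simp add: sum_product sum_divide_distrib)
  also have "\<dots> = (if i div r = j div r then of_nat r else 0) * (if i mod r = j mod r then of_nat r else 0) / of_nat (r*r)"
    using i j by (simp add: dft_sum divr modr)
  also have "\<dots> = (1\<^sub>m (r*r)) $$ (i,j)"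
  proof -
    have "i = j \<longleftrightarrow> i div r = j div r \<and> i mod r = j mod r"
      by (metis div_mult_mod_eq)
    thus ?thesis using i j r by auto
  qed
  finally show "(QQ r \<theta> \<phi> * PP r \<theta> \<phi>) $$ (i,j) = (1\<^sub>m (r*r)) $$ (i,j)" .
qed (auto simp: QQ_def PP_def)

lemma dim_Delta[simp]: "dim_row (Delta r \<theta>) = r" "dim_col (Delta r \<theta>) = r"
  by (simp_all add: Delta_def)

lemma DG_carrier: "DeltaGamma r \<theta> \<phi> \<in> carrier_mat (r*r) (r*r)"
  by (simp add: DeltaGamma_def kron_def)

lemma DG_entry:
  assumes "i < r*r" "l < r*r"
  shows "DeltaGamma r \<theta> \<phi> $$ (i,l) =
     Delta r \<theta> $$ (i div r, l div r) * (if i mod r = l mod r then 1 else 0)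
   + (if i div r = l div r then 1 else 0) * Delta r \<phi> $$ (i mod r, l mod r)"
  using assms by (simp add: DeltaGamma_def kron_def divr modr)

lemma sum_if_const: "(\<Sum>b\<in>B. if P then f b else 0) = (if P then (\<Sum>b\<in>B. f b) else (0::'a::comm_monoid_add))"
  by auto

lemma AP: assumes r: "r \<ge> 2"
  shows "DeltaGamma r \<theta> \<phi> * PP r \<theta> \<phi> = PP r \<theta> \<phi> * DD r \<theta> \<phi>"
proof (rule eq_matI)
  fix i j assume "i < dim_row (PP r \<theta> \<phi> * DD r \<theta> \<phi>)" "j < dim_col (PP r \<theta> \<phi> * DD r \<theta> \<phi>)"
  hence i: "i < r*r" and j: "j < r*r" by (auto simp: PP_def DD_def)
  define x where "x = al r \<theta> (j div r)"
  define y where "y = al r \<phi> (j mod r)"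
  have "(DeltaGamma r \<theta> \<phi> * PP r \<theta> \<phi>) $$ (i,j) = (\<Sum>l<r*r. DeltaGamma r \<theta> \<phi> $$ (i,l) * PP r \<theta> \<phi> $$ (l,j))"
    by (rule mult_entry) (use i j DG_carrier in \<open>auto simp: PP_def\<close>)
  also have "\<dots> = (\<Sum>l<r*r.
     (Delta r \<theta> $$ (i div r, l div r) * (if i mod r = l mod r then 1 else 0)
   + (if i div r = l div r then 1 else 0) * Delta r \<phi> $$ (i mod r, l mod r)) * (cis (real (l div r) * x) * cis (real (l mod r) * y)))"
    by (rule sum.cong) (use i j in \<open>auto simp: DG_entry PP_def x_def y_def\<close>)
  also have "\<dots> = (\<Sum>a<r. \<Sum>b<r.
     (Delta r \<theta> $$ (i div r, a) * (if i mod r = b then 1 else 0)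
   + (if i div r = a then 1 else 0) * Delta r \<phi> $$ (i mod r, b)) * (cis (real a * x) * cis (real b * y)))"
    by (rule sum_divmod)
  also have "\<dots> = (\<Sum>a<r. \<Sum>b<r. (if b = i mod r then Delta r \<theta> $$ (i div r, a) * cis (real a * x) * cis (real b * y) else 0))
     + (\<Sum>a<r. \<Sum>b<r. (if a = i div r then cis (real a * x) * (Delta r \<phi> $$ (i mod r, b) * cis (real b * y)) else 0))"
  proof -
    have "(\<Sum>a<r. \<Sum>b<r.
     (Delta r \<theta> $$ (i div r, a) * (if i mod r = b then 1 else 0)
   + (if i div r = a then 1 else 0) * Delta r \<phi> $$ (i mod r, b)) * (cis (real a * x) * cis (real b * y)))
      = (\<Sum>a<r. \<Sum>b<r. (if b = i mod r then Delta r \<theta> $$ (i div r, a) * cis (real a * x) * cis (real b * y) else 0)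
         + (if a = i div r then cis (real a * x) * (Delta r \<phi> $$ (i mod r, b) * cis (real b * y)) else 0))"
      by (intro sum.cong refl) (auto simp: algebra_simps)
    thus ?thesis by (simp only: sum.distrib)
  qed
  also have "\<dots> = (\<Sum>a<r. Delta r \<theta> $$ (i div r, a) * cis (real a * x)) * cis (real (i mod r) * y)
     + cis (real (i div r) * x) * (\<Sum>b<r. Delta r \<phi> $$ (i mod r, b) * cis (real b * y))"
    using i by (simp add: modr divr sum_distrib_left sum_distrib_right sum_if_const)
  also have "\<dots> = complex_of_real (ev r \<theta> (j div r)) * cis (real (i div r) * x) * cis (real (i mod r) * y)
     + cis (real (i div r) * x) * (complex_of_real (ev r \<phi> (j mod r)) * cis (real (i mod r) * y))"
    unfolding x_def y_def using i r by (simp add: Delta_eig divr modr)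
  also have "\<dots> = PP r \<theta> \<phi> $$ (i,j) * complex_of_real (gg r \<theta> \<phi> j)"
    using i j by (simp add: PP_def gg_def x_def y_def algebra_simps)
  also have "\<dots> = (\<Sum>l<r*r. PP r \<theta> \<phi> $$ (i,l) * DD r \<theta> \<phi> $$ (l,j))"
    using i j by (simp add: DD_def if_distrib[of "\<lambda>z. _ * z"] cong: if_cong)
  also have "\<dots> = (PP r \<theta> \<phi> * DD r \<theta> \<phi>) $$ (i,j)"
    by (rule mult_entry[symmetric]) (use i j in \<open>auto simp: PP_def DD_def\<close>)
  finally show "(DeltaGamma r \<theta> \<phi> * PP r \<theta> \<phi>) $$ (i,j) = (PP r \<theta> \<phi> * DD r \<theta> \<phi>) $$ (i,j)" .
qed (auto simp: PP_def DD_def DeltaGamma_def kron_def)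

lemma sum_list_singletons: "sum_list (map (\<lambda>a. {#a#}) xs) = mset xs"
  by (induction xs) auto

lemma eigs_formula: assumes r: "r \<ge> 2"
  shows "eigs_sorted (DeltaGamma r \<theta> \<phi>) = sort (map (gg r \<theta> \<phi>) [0..<r*r])"
proof -
  let ?A = "DeltaGamma r \<theta> \<phi>" and ?P = "PP r \<theta> \<phi>" and ?Q = "QQ r \<theta> \<phi>" and ?D = "DD r \<theta> \<phi>"
  let ?n = "r*r"
  have cA: "?A \<in> carrier_mat ?n ?n" by (rule DG_carrier)
  have cP: "?P \<in> carrier_mat ?n ?n" by (simp add: PP_def)
  have cQ: "?Q \<in> carrier_mat ?n ?n" by (simp add: QQ_def)
  have cD: "?D \<in> carrier_mat ?n ?n" by (simp add: DD_def)
  have QP: "?Q * ?P = 1\<^sub>m ?n" using QP r by simp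
  have PQ: "?P * ?Q = 1\<^sub>m ?n" by (rule mat_mult_left_right_inverse[OF cQ cP QP])
  have "?A = ?A * (?P * ?Q)" using cA by (simp add: PQ)
  also have "\<dots> = (?A * ?P) * ?Q" using cA cP cQ by (simp add: assoc_mult_mat)
  also have "\<dots> = ?P * ?D * ?Q" by (simp add: AP[OF r])
  finally have AD: "?A = ?P * ?D * ?Q" .
  have "similar_mat ?A ?D" unfolding similar_mat_def similar_mat_wit_def
    using cA cP cQ cD PQ QP AD by (intro exI[of _ ?P] exI[of _ ?Q]) (auto simp: Let_def)
  hence cp: "char_poly ?A = char_poly ?D" by (rule char_poly_similar)
  have ut: "upper_triangular ?D" by (auto simp: upper_triangular_def DD_def)
  have cpD: "char_poly ?D = (\<Prod>a\<leftarrow>diag_mat ?D. [:- a, 1:])"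
    by (rule char_poly_upper_triangular[OF cD ut])
  have dg: "diag_mat ?D = map (\<lambda>i. complex_of_real (gg r \<theta> \<phi> i)) [0..<r*r]"
    by (simp add: diag_mat_def DD_def)
  have "proots (char_poly ?A) = sum_list (map proots (map (\<lambda>a. [:- a, 1:]) (diag_mat ?D)))"
  proof -
    have "0 \<notin> set (map (\<lambda>a. [:- a, 1:]) (diag_mat ?D))" by auto
    from proots_prod_list[OF this] show ?thesis unfolding cp cpD by simp
  qed
  also have "\<dots> = mset (diag_mat ?D)" by (simp add: o_def sum_list_singletons)
  finally have "image_mset Re (proots (char_poly ?A)) = mset (map (gg r \<theta> \<phi>) [0..<r*r])"
    by (simp add: dg multiset.map_comp o_def)
  thus ?thesis unfolding eigs_sorted_def by (simp only: sorted_list_of_multiset_mset)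
qed


definition cnt :: "nat \<Rightarrow> (nat \<Rightarrow> real) \<Rightarrow> real \<Rightarrow> nat" where
  "cnt n g E = card {i. i < n \<and> g i < E}"

lemma down_closed:
  assumes "finite (S::nat set)" "\<And>i j. i \<in> S \<Longrightarrow> j \<le> i \<Longrightarrow> j \<in> S"
  shows "S = {..<card S}"
proof (cases "S = {}")
  case True thus ?thesis by simp
next
  case False
  have "S = {..Max S}"
  proof
    show "S \<subseteq> {..Max S}" using assms(1) by auto
    show "{..Max S} \<subseteq> S" using assms(2) Max_in[OF assms(1) False] by auto
  qed
  hence "card S = Suc (Max S)" by (metis card_atMost)
  thus ?thesis using \<open>S = {..Max S}\<close> by (simp add: lessThan_Suc_atMost)
qed

lemma sorted_count:
  fixes g :: "nat \<Rightarrow> real" and n k :: nat and E :: real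
  defines "xs \<equiv> sort (map g [0..<n])"
  assumes k: "1 \<le> k" "k \<le> n"
  shows "xs ! (k - 1) < E \<longleftrightarrow> k \<le> cnt n g E"
proof -
  define S where "S = {i. i < length xs \<and> xs ! i < E}"
  have len: "length xs = n" by (simp add: xs_def)
  have "card S = length (filter (\<lambda>x. x < E) xs)" by (simp add: S_def length_filter_conv_card)
  also have "\<dots> = size (filter_mset (\<lambda>x. x < E) (mset xs))" by (metis mset_filter size_mset)
  also have "\<dots> = size (filter_mset (\<lambda>x. x < E) (mset (map g [0..<n])))" by (simp add: xs_def)
  also have "\<dots> = length (filter (\<lambda>x. x < E) (map g [0..<n]))" by (metis mset_filter size_mset)
  also have "\<dots> = cnt n g E" unfolding length_filter_conv_card cnt_def
    by (intro arg_cong[where f=card] Collect_cong) auto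
  finally have cS: "card S = cnt n g E" .
  have "S = {..<card S}"
  proof (rule down_closed)
    show "finite S" by (simp add: S_def)
    fix i j assume "i \<in> S" "j \<le> i"
    moreover have "sorted xs" by (simp add: xs_def)
    ultimately show "j \<in> S" unfolding S_def using sorted_nth_mono by fastforce
  qed
  hence "(k - 1 \<in> S) \<longleftrightarrow> k - 1 < cnt n g E" using cS by auto
  thus ?thesis using k len by (auto simp: S_def)
qed

lemma sorted_count2:
  fixes g :: "nat \<Rightarrow> real" and n k :: nat and E :: real
  defines "xs \<equiv> sort (map g [0..<n])"
  assumes k: "1 \<le> k" "k \<le> n" and ne: "\<forall>i<n. g i \<noteq> E"
  shows "E < xs ! (k - 1) \<longleftrightarrow> cnt n g E < k"
proof -
  have "xs ! (k - 1) \<in> g ` {0..<n}" using nth_mem[of "k - 1" xs] k by (simp add: xs_def)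
  hence "xs ! (k - 1) \<noteq> E" using ne by auto
  thus ?thesis using sorted_count[OF k, of g E] unfolding xs_def by auto
qed

lemma lam_lt:
  assumes "r \<ge> 2" "1 \<le> k" "k \<le> r*r"
  shows "lamG r k \<theta> \<phi> < ereal E \<longleftrightarrow> k \<le> cnt (r*r) (gg r \<theta> \<phi>) E"
  using assms sorted_count[of k "r*r" "gg r \<theta> \<phi>" E] by (simp add: lamG_def eigs_formula)

lemma lam_gt:
  assumes "r \<ge> 2" "1 \<le> k" "k \<le> r*r" "\<forall>i<r*r. gg r \<theta> \<phi> i \<noteq> E"
  shows "ereal E < lamG r k \<theta> \<phi> \<longleftrightarrow> cnt (r*r) (gg r \<theta> \<phi>) E < k"
  using assms sorted_count2[of k "r*r" "gg r \<theta> \<phi>" E] by (simp add: lamG_def eigs_formula)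

lemma cnt_le: "cnt n g E \<le> n"
proof -
  have "{i. i < n \<and> g i < E} \<subseteq> {..<n}" by auto
  thus ?thesis unfolding cnt_def by (metis card_lessThan card_mono finite_lessThan)
qed

lemma cnt_sum: "cnt n g E = (\<Sum>i<n. if g i < E then 1 else 0)"
  using sum.inter_filter[of "{..<n}" "\<lambda>_. 1::nat" "\<lambda>i. g i < E"] by (simp add: cnt_def)



lemma perturb_one:
  fixes f :: "real \<Rightarrow> real"
  assumes der: "(f has_real_derivative D) (at 0)" and nz: "f 0 = E \<Longrightarrow> D \<noteq> 0"
  shows "eventually (\<lambda>t. f t \<noteq> E \<and> (f t < E \<longleftrightarrow> (f 0 < E \<or> (f 0 = E \<and> D < 0)))) (at_right 0)"
proof -
  have ct: "isCont f 0" using der by (rule DERIV_isCont)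
  hence lim: "(f \<longlongrightarrow> f 0) (at_right 0)" by (simp add: isCont_def filterlim_at_split)
  consider "f 0 < E" | "f 0 > E" | "f 0 = E \<and> D < 0" | "f 0 = E \<and> D > 0"
    using nz by fastforce
  thus ?thesis
  proof cases
    case 1
    have "eventually (\<lambda>t. f t < E) (at_right 0)" using order_tendstoD(2)[OF lim 1] .
    thus ?thesis by eventually_elim (use 1 in auto)
  next
    case 2
    have "eventually (\<lambda>t. f t > E) (at_right 0)" using order_tendstoD(1)[OF lim 2] .
    thus ?thesis by eventually_elim (use 2 in auto)
  next
    case 3
    then obtain d where d: "d > 0" "\<forall>h>0. h < d \<longrightarrow> f (0 + h) < f 0"
      using DERIV_neg_dec_right[OF der] by blast
    have "eventually (\<lambda>t. f t < E) (at_right 0)"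
      unfolding eventually_at_right_field using d 3 by (intro exI[of _ d]) auto
    thus ?thesis by eventually_elim (use 3 in auto)
  next
    case 4
    then obtain d where d: "d > 0" "\<forall>h>0. h < d \<longrightarrow> f 0 < f (0 + h)"
      using DERIV_pos_inc_right[OF der] by blast
    have "eventually (\<lambda>t. f t > E) (at_right 0)"
      unfolding eventually_at_right_field using d 4 by (intro exI[of _ d]) auto
    thus ?thesis by eventually_elim (use 4 in auto)
  qed
qed

lemma perturb:
  fixes h :: "nat \<Rightarrow> real \<Rightarrow> real" and D :: "nat \<Rightarrow> real"
  assumes der: "\<And>i. i \<in> I \<Longrightarrow> (h i has_real_derivative D i) (at 0)"
    and nz: "\<And>i. i \<in> I \<Longrightarrow> h i 0 = E \<Longrightarrow> D i \<noteq> 0"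
    and fin: "finite I" and dl: "\<delta> > 0"
  shows "\<exists>t. 0 < t \<and> t < \<delta> \<and> (\<forall>i\<in>I. h i t \<noteq> E \<and> (h i t < E \<longleftrightarrow> (h i 0 < E \<or> (h i 0 = E \<and> D i < 0))))"
proof -
  have "eventually (\<lambda>t. \<forall>i\<in>I. h i t \<noteq> E \<and> (h i t < E \<longleftrightarrow> (h i 0 < E \<or> (h i 0 = E \<and> D i < 0)))) (at_right 0)"
    using fin by (subst eventually_ball_finite_distrib) (auto intro!: perturb_one der dest: nz)
  moreover have "eventually (\<lambda>t. t < \<delta>) (at_right (0::real))"
    unfolding eventually_at_right_field using dl by (intro exI[of _ \<delta>]) auto
  ultimately have "eventually (\<lambda>t. t < \<delta> \<and> (\<forall>i\<in>I. h i t \<noteq> E \<and> (h i t < E \<longleftrightarrow> (h i 0 < E \<or> (h i 0 = E \<and> D i < 0))))) (at_right 0)"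
    by eventually_elim auto
  then obtain b where b: "b > 0" "\<forall>y>0. y < b \<longrightarrow> y < \<delta> \<and> (\<forall>i\<in>I. h i y \<noteq> E \<and> (h i y < E \<longleftrightarrow> (h i 0 < E \<or> (h i 0 = E \<and> D i < 0))))"
    unfolding eventually_at_right_field by auto
  show ?thesis using b(2)[rule_format, of "b/2"] b(1) by (intro exI[of _ "b/2"]) auto
qed



lemma sin_pos_iff:
  assumes h: "h > 0" and a: "a < 2*h"
  shows "sin (pi * real a / real h) > 0 \<longleftrightarrow> 0 < a \<and> a < h"
    and "sin (pi * real a / real h) = 0 \<longleftrightarrow> a = 0 \<or> a = h"
proof -
  have "(sin (pi * real a / real h) > 0 \<longleftrightarrow> 0 < a \<and> a < h) \<and> (sin (pi * real a / real h) = 0 \<longleftrightarrow> a = 0 \<or> a = h)"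
  proof (cases "a = 0 \<or> a = h")
    case True thus ?thesis using h by auto
  next
    case False
    show ?thesis
    proof (cases "a < h")
      case True
      have "0 < pi * real a / real h" using False h by auto
      moreover have "pi * real a / real h < pi" using True h by (simp add: field_simps)
      ultimately have "sin (pi * real a / real h) > 0" by (rule sin_gt_zero)
      thus ?thesis using True False by auto
    next
      case nlt: False
      have "0 < pi * real a / real h - pi" using nlt False h by (simp add: field_simps)
      moreover have "pi * real a / real h - pi < pi" using a h by (simp add: field_simps)
      ultimately have "sin (pi * real a / real h - pi) > 0" by (rule sin_gt_zero)
      hence "sin (pi * real a / real h) < 0" by (simp add: sin_diff)
      thus ?thesis using nlt False by auto
    qed
  qed
  thus "sin (pi * real a / real h) > 0 \<longleftrightarrow> 0 < a \<and> a < h"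
    and "sin (pi * real a / real h) = 0 \<longleftrightarrow> a = 0 \<or> a = h" by auto
qed

lemma sin_pi_pos_iff:
  assumes h: "h > 0" and a: "a < 2*h"
  shows "sin ((pi + 2 * pi * real a) / real (2*h)) > 0 \<longleftrightarrow> a < h"
    and "sin ((pi + 2 * pi * real a) / real (2*h)) \<noteq> 0"
proof -
  have "(sin ((pi + 2 * pi * real a) / real (2*h)) > 0 \<longleftrightarrow> a < h) \<and> sin ((pi + 2 * pi * real a) / real (2*h)) \<noteq> 0"
  proof (cases "a < h")
    case True
    have "0 < pi + 2 * pi * real a" by (simp add: add_pos_nonneg)
    hence "0 < (pi + 2 * pi * real a) / real (2*h)" using h by simp
    moreover have "(pi + 2 * pi * real a) / real (2*h) < pi"
    proof -
      have "real a + 1 \<le> real h" using True by simp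
      hence "pi * (real a + 1) \<le> pi * real h" by (intro mult_left_mono) auto
      moreover have "pi * (real a + 1) = pi * real a + pi" "pi * real (2*h) = 2 * (pi * real h)" by (simp_all add: algebra_simps)
      ultimately have "pi + 2 * pi * real a < pi * real (2*h)" using pi_gt_zero by linarith
      thus ?thesis using h by (simp add: field_simps)
    qed
    ultimately have "sin ((pi + 2 * pi * real a) / real (2*h)) > 0" by (rule sin_gt_zero)
    thus ?thesis using True by auto
  next
    case False
    define x where "x = (pi + 2 * pi * real a) / real (2*h) - pi"
    have "0 < x"
    proof -
      have "real h \<le> real a" using False by simp
      hence "pi * real h \<le> pi * real a" by (intro mult_left_mono) auto
      moreover have "pi * real (2*h) = 2 * (pi * real h)" by (simp_all add: algebra_simps)
      ultimately have "pi * real (2*h) < pi + 2 * pi * real a" using pi_gt_zero by linarith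
      thus ?thesis using h by (simp add: x_def field_simps)
    qed
    moreover have "x < pi"
    proof -
      have "real a + 1 \<le> 2 * real h" using a by linarith
      hence "pi * (real a + 1) \<le> pi * (2 * real h)" by (intro mult_left_mono) auto
      moreover have "pi * (real a + 1) = pi * real a + pi" "pi * (2 * real h) = 2 * (pi * real h)"
         "2 * pi * real (2*h) = 4 * (pi * real h)" by (simp_all add: algebra_simps)
      ultimately have "pi + 2 * pi * real a < 2 * pi * real (2*h)" using pi_gt_zero by linarith
      thus ?thesis using h by (simp add: x_def field_simps)
    qed
    ultimately have "sin x > 0" by (rule sin_gt_zero)
    hence "sin ((pi + 2 * pi * real a) / real (2*h)) < 0" by (simp add: x_def sin_diff)
    thus ?thesis using False by auto
  qed
  thus "sin ((pi + 2 * pi * real a) / real (2*h)) > 0 \<longleftrightarrow> a < h"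
    and "sin ((pi + 2 * pi * real a) / real (2*h)) \<noteq> 0" by auto
qed

lemma cos_sym0: assumes "h > 0" "b \<le> 2*h"
  shows "cos (pi * real (2*h - b) / real h) = cos (pi * real b / real h)"
proof -
  have "pi * real (2*h - b) / real h = 2 * pi - pi * real b / real h"
    using assms by (simp add: of_nat_diff field_simps)
  thus ?thesis by (simp add: cos_diff)
qed

lemma cos_symp: assumes "h > 0" "b < 2*h"
  shows "cos ((pi + 2 * pi * real (2*h - 1 - b)) / real (2*h)) = cos ((pi + 2 * pi * real b) / real (2*h))"
proof -
  have "(pi + 2 * pi * real (2*h - 1 - b)) / real (2*h) = 2 * pi - (pi + 2 * pi * real b) / real (2*h)"
    using assms by (simp add: of_nat_diff field_simps)
  thus ?thesis by (simp add: cos_diff)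
qed



definition Dv :: "nat \<Rightarrow> real \<Rightarrow> real \<Rightarrow> real \<Rightarrow> nat \<Rightarrow> real" where
  "Dv r x0 \<sigma> c i = - (2 * \<sigma> / real r) * (sin (al r x0 (i div r)) + c * sin (al r x0 (i mod r)))"

lemma gg_deriv: assumes "r > 0"
  shows "((\<lambda>t. gg r (x0 + \<sigma>*t) (x0 + \<sigma>*c*t) i) has_real_derivative Dv r x0 \<sigma> c i) (at 0)"
proof -
  have "((\<lambda>t. 2 * cos ((x0 + \<sigma>*t + 2 * pi * real (i div r)) / real r) + 2 * cos ((x0 + \<sigma>*c*t + 2 * pi * real (i mod r)) / real r))
     has_real_derivative Dv r x0 \<sigma> c i) (at 0)"
    using assms by (auto intro!: derivative_eq_intros simp: Dv_def al_def field_simps)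
  thus ?thesis by (simp add: gg_def ev_def al_def)
qed

lemma pert_count:
  assumes r: "r \<ge> 2" and dl: "\<delta> > 0"
    and nz: "\<And>i. i < r*r \<Longrightarrow> gg r x0 x0 i = E \<Longrightarrow> Dv r x0 \<sigma> c i \<noteq> 0"
  shows "\<exists>t. 0 < t \<and> t < \<delta> \<and> (\<forall>i<r*r. gg r (x0 + \<sigma>*t) (x0 + \<sigma>*c*t) i \<noteq> E) \<and>
    cnt (r*r) (gg r (x0 + \<sigma>*t) (x0 + \<sigma>*c*t)) E = cnt (r*r) (gg r x0 x0) E +
       (\<Sum>i<r*r. if gg r x0 x0 i = E \<and> Dv r x0 \<sigma> c i < 0 then 1 else 0) \<and>
    (E < gg r x0 x0 0 \<longrightarrow> cnt (r*r) (gg r (x0 + \<sigma>*t) (x0 + \<sigma>*c*t)) E < r*r)"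
proof -
  define h where "h i t = gg r (x0 + \<sigma>*t) (x0 + \<sigma>*c*t) i" for i t
  have h0: "h i 0 = gg r x0 x0 i" for i by (simp add: h_def)
  obtain t where t: "0 < t" "t < \<delta>"
    and P: "\<forall>i\<in>{..<r*r}. h i t \<noteq> E \<and> (h i t < E \<longleftrightarrow> (h i 0 < E \<or> (h i 0 = E \<and> Dv r x0 \<sigma> c i < 0)))"
  proof -
    have der: "(h i has_real_derivative Dv r x0 \<sigma> c i) (at 0)" for i
      unfolding h_def using gg_deriv r by simp
    have "\<exists>t. 0 < t \<and> t < \<delta> \<and> (\<forall>i\<in>{..<r*r}. h i t \<noteq> E \<and> (h i t < E \<longleftrightarrow> (h i 0 < E \<or> (h i 0 = E \<and> Dv r x0 \<sigma> c i < 0))))"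
      by (rule perturb[OF der _ _ dl]) (use nz in \<open>auto simp: h0\<close>)
    thus ?thesis using that by blast
  qed
  have c1: "cnt (r*r) (gg r (x0 + \<sigma>*t) (x0 + \<sigma>*c*t)) E = (\<Sum>i<r*r. if h i t < E then 1 else 0)"
    by (simp add: cnt_sum h_def)
  also have "\<dots> = (\<Sum>i<r*r. (if gg r x0 x0 i < E then 1 else 0) + (if gg r x0 x0 i = E \<and> Dv r x0 \<sigma> c i < 0 then 1 else 0))"
    by (rule sum.cong) (use P in \<open>auto simp: h0\<close>)
  also have "\<dots> = cnt (r*r) (gg r x0 x0) E + (\<Sum>i<r*r. if gg r x0 x0 i = E \<and> Dv r x0 \<sigma> c i < 0 then 1 else 0)"
    by (simp add: sum.distrib cnt_sum)
  finally have c2: "cnt (r*r) (gg r (x0 + \<sigma>*t) (x0 + \<sigma>*c*t)) E = cnt (r*r) (gg r x0 x0) E + (\<Sum>i<r*r. if gg r x0 x0 i = E \<and> Dv r x0 \<sigma> c i < 0 then 1 else 0)" .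
  have c3: "cnt (r*r) (gg r (x0 + \<sigma>*t) (x0 + \<sigma>*c*t)) E < r*r" if E0: "E < gg r x0 x0 0"
  proof -
    have "0 < r * r" using r by simp
    hence "\<not> h 0 t < E" using P E0 by (auto simp: h0)
    hence "{i. i < r*r \<and> gg r (x0 + \<sigma>*t) (x0 + \<sigma>*c*t) i < E} \<subseteq> {1..<r*r}"
      by (auto simp: h_def) (metis Suc_leI neq0_conv)
    hence "cnt (r*r) (gg r (x0 + \<sigma>*t) (x0 + \<sigma>*c*t)) E \<le> card {1..<r*r}"
      unfolding cnt_def by (intro card_mono) auto
    moreover have "card {1..<r*r} < r*r" using \<open>0 < r*r\<close> by simp
    ultimately show ?thesis by linarith
  qed
  show ?thesis using t P c2 c3 by (intro exI[of _ t]) (auto simp: h_def)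
qed



lemma sym_sum1:
  fixes f :: "nat \<Rightarrow> nat"
  assumes h: "h > 0" and sym: "\<And>b. 0 < b \<Longrightarrow> b < 2*h \<Longrightarrow> f (2*h - b) = f b"
  shows "(\<Sum>b<2*h. f b) = f 0 + f h + 2 * (\<Sum>b\<in>{1..<h}. f b)"
proof -
  have "(\<Sum>b<2*h. f b) = (\<Sum>b\<in>{0..<1}. f b) + (\<Sum>b\<in>{1..<h}. f b) + (\<Sum>b\<in>{h..<h+1}. f b) + (\<Sum>b\<in>{h+1..<2*h}. f b)"
  proof -
    have e1: "sum f {0..<2*h} = sum f {0..<1} + sum f {1..<2*h}"
      by (rule sum.atLeastLessThan_concat[symmetric]) (use h in auto)
    have e2: "sum f {1..<2*h} = sum f {1..<h} + sum f {h..<2*h}"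
      by (rule sum.atLeastLessThan_concat[symmetric]) (use h in auto)
    have e3: "sum f {h..<2*h} = sum f {h..<h+1} + sum f {h+1..<2*h}"
      by (rule sum.atLeastLessThan_concat[symmetric]) (use h in auto)
    show ?thesis unfolding atLeast0LessThan[symmetric] e1 e2 e3 by simp
  qed
  also have "(\<Sum>b\<in>{h+1..<2*h}. f b) = (\<Sum>b\<in>{1..<h}. f b)"
  proof -
    have "(\<Sum>b\<in>{h+1..<2*h}. f b) = (\<Sum>b\<in>{1..<h}. f (2*h - b))"
      by (rule sum.reindex_bij_witness[of _ "\<lambda>b. 2*h - b" "\<lambda>b. 2*h - b"]) auto
    also have "\<dots> = (\<Sum>b\<in>{1..<h}. f b)" by (rule sum.cong) (auto intro: sym)
    finally show ?thesis .
  qed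
  finally show ?thesis by simp
qed

lemma sym_sum2:
  fixes f :: "nat \<Rightarrow> nat"
  assumes sym: "\<And>b. b < 2*h \<Longrightarrow> f (2*h - 1 - b) = f b"
  shows "(\<Sum>b<2*h. f b) = 2 * (\<Sum>b<h. f b)"
proof -
  have "(\<Sum>b<2*h. f b) = (\<Sum>b\<in>{0..<h}. f b) + (\<Sum>b\<in>{h..<2*h}. f b)"
    by (simp add: atLeast0LessThan[symmetric] sum.atLeastLessThan_concat)
  also have "(\<Sum>b\<in>{h..<2*h}. f b) = (\<Sum>b\<in>{0..<h}. f b)"
  proof -
    have "(\<Sum>b\<in>{h..<2*h}. f b) = (\<Sum>b\<in>{0..<h}. f (2*h - 1 - b))"
      by (rule sum.reindex_bij_witness[of _ "\<lambda>b. 2*h - 1 - b" "\<lambda>b. 2*h - 1 - b"]) auto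
    also have "\<dots> = (\<Sum>b\<in>{0..<h}. f b)"
    proof (rule sum.cong)
      fix x assume "x \<in> {0..<h}"
      thus "f (2*h - 1 - x) = f x" by (intro sym) auto
    qed simp
    finally show ?thesis .
  qed
  finally show ?thesis by (simp add: atLeast0LessThan)
qed

lemma small_c:
  assumes "finite (A::real set)" "\<forall>x\<in>A. x > 0"
  shows "\<exists>c>0. c < 1 \<and> (\<forall>x\<in>A. c < x)"
proof -
  define m where "m = Min (insert 1 A)"
  have "m > 0" using assms unfolding m_def by (subst Min_gr_iff) auto
  moreover have "m \<le> x" if "x \<in> insert 1 A" for x using assms that unfolding m_def by auto
  ultimately show ?thesis by (intro exI[of _ "m/2"]) force
qed

lemma sign_lemma:
  fixes s s' c :: real
  assumes "s \<noteq> 0" "c < \<bar>s\<bar>" "c > 0" "\<bar>s'\<bar> \<le> 1"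
  shows "s + c * s' > 0 \<longleftrightarrow> s > 0" "s + c * s' \<noteq> 0"
proof -
  have "\<bar>c * s'\<bar> \<le> c" using assms by (simp add: abs_mult mult_left_le)
  thus "s + c * s' > 0 \<longleftrightarrow> s > 0" "s + c * s' \<noteq> 0" using assms by auto
qed


lemma sum_if_split:
  "(\<Sum>a\<in>A. if P a then X a + 2 * Y a else 0) = (\<Sum>a\<in>A. if P a then X a else 0) + 2 * (\<Sum>a\<in>A. if P a then Y a else (0::nat))"
  unfolding sum_distrib_left sum.distrib[symmetric] by (rule sum.cong) auto

lemma aux2: "(x::nat) = A + 2 * B + A \<Longrightarrow> x = 2 * (A + B)" by simp

lemma al0: "h > 0 \<Longrightarrow> al (2*h) 0 a = pi * real a / real h"
  by (simp add: al_def field_simps)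

lemma parity00:
  fixes h :: nat and E c :: real
  assumes h: "h > 0" and E: "E < 0" "E \<noteq> -4" "E \<noteq> 0" "E \<noteq> 4" and c: "c > 0"
    and cs: "\<And>a. a < 2*h \<Longrightarrow> sin (al (2*h) 0 a) \<noteq> 0 \<Longrightarrow> c < \<bar>sin (al (2*h) 0 a)\<bar>"
  shows "\<forall>i<(2*h)*(2*h). gg (2*h) 0 0 i = E \<longrightarrow> Dv (2*h) 0 1 c i \<noteq> 0"
    and "even (\<Sum>i<(2*h)*(2*h). if gg (2*h) 0 0 i = E \<and> Dv (2*h) 0 1 c i < 0 then 1 else 0 :: nat)"
proof -
  define r where "r = 2*h"
  have r0: "r > 0" using h by (simp add: r_def)
  define s where "s a = sin (pi * real a / real h)" for a
  define co where "co a = cos (pi * real a / real h)" for a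
  have co0: "co 0 = 1" and coh: "co h = -1" using h by (simp_all add: co_def)
  have cob: "co b \<ge> -1" "co b \<le> 1" for b by (simp_all add: co_def)
  have sb: "\<bar>s b\<bar> \<le> 1" for b by (simp add: s_def)
  have cs': "\<And>a. a < r \<Longrightarrow> s a \<noteq> 0 \<Longrightarrow> c < \<bar>s a\<bar>" using cs h by (simp add: r_def s_def al0)
  have spos: "a < r \<Longrightarrow> s a > 0 \<longleftrightarrow> 0 < a \<and> a < h" for a using sin_pos_iff(1)[OF h] by (simp add: r_def s_def)
  have szero: "a < r \<Longrightarrow> s a = 0 \<longleftrightarrow> a = 0 \<or> a = h" for a using sin_pos_iff(2)[OF h] by (simp add: r_def s_def)
  have gg_eq: "gg r 0 0 i = 2 * co (i div r) + 2 * co (i mod r)" for i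
    using h by (simp add: gg_def ev_def co_def r_def al0)
  have Dv_eq: "Dv r 0 1 c i < 0 \<longleftrightarrow> s (i div r) + c * s (i mod r) > 0" for i
  proof -
    have "Dv r 0 1 c i = - (2 / real r) * (s (i div r) + c * s (i mod r))"
      using h by (simp add: Dv_def s_def r_def al0)
    moreover have "2 / real r > 0" using r0 by simp
    ultimately show ?thesis by (simp only: mult_minus_left neg_less_0_iff_less zero_less_mult_iff) auto
  qed
  have Dv_ne: "Dv r 0 1 c i \<noteq> 0 \<longleftrightarrow> s (i div r) + c * s (i mod r) \<noteq> 0" for i
    using h r0 by (simp add: Dv_def s_def r_def al0)
  have key: "s a + c * s b \<noteq> 0 \<and> (s a + c * s b > 0 \<longleftrightarrow> (0 < a \<and> a < h) \<or> ((a = 0 \<or> a = h) \<and> 0 < b \<and> b < h))"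
    if ab: "a < r" "b < r" and Z: "2 * co a + 2 * co b = E" for a b
  proof (cases "s a = 0")
    case False
    have "a \<noteq> 0" "a \<noteq> h" using False szero[OF ab(1)] by auto
    thus ?thesis using sign_lemma[OF False cs'[OF ab(1) False] c sb] spos[OF ab(1)] by auto
  next
    case True
    hence a0h: "a = 0 \<or> a = h" using szero[OF ab(1)] by auto
    have sbn: "s b \<noteq> 0"
    proof
      assume "s b = 0"
      hence "b = 0 \<or> b = h" using szero[OF ab(2)] by auto
      thus False using a0h Z E co0 coh by auto
    qed
    have "c * s b > 0 \<longleftrightarrow> s b > 0" using c by (simp add: zero_less_mult_iff)
    thus ?thesis using True sbn c a0h spos[OF ab(2)] h by auto
  qed
  show "\<forall>i<(2*h)*(2*h). gg (2*h) 0 0 i = E \<longrightarrow> Dv (2*h) 0 1 c i \<noteq> 0"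
  proof (intro allI impI)
    fix i assume i: "i < (2*h)*(2*h)" and g: "gg (2*h) 0 0 i = E"
    have "i div r < r" "i mod r < r" using i by (simp_all add: r_def divr modr)
    thus "Dv (2*h) 0 1 c i \<noteq> 0" using key[of "i div r" "i mod r"] g
      unfolding r_def[symmetric] Dv_ne gg_eq by auto
  qed
  define z where "z a b = (if 2 * co a + 2 * co b = E then 1 else 0 :: nat)" for a b
  have z0: "z a 0 = 0" "z 0 a = 0" for a using cob[of a] E co0 by (auto simp: z_def)
  have zsym: "z a b = z b a" for a b by (simp add: z_def add.commute)
  have "(\<Sum>i<r*r. if gg r 0 0 i = E \<and> Dv r 0 1 c i < 0 then 1 else 0 :: nat) =
     (\<Sum>i<r*r. (\<lambda>a b. if 2 * co a + 2 * co b = E \<and> s a + c * s b > 0 then 1 else 0 :: nat) (i div r) (i mod r))"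
    by (simp add: gg_eq Dv_eq)
  also have "\<dots> = (\<Sum>a<r. \<Sum>b<r. if 2 * co a + 2 * co b = E \<and> s a + c * s b > 0 then 1 else 0)"
    by (rule sum_divmod)
  also have "\<dots> = (\<Sum>a<r. \<Sum>b<r. (if 0 < a \<and> a < h then z a b else 0) + (if a = h then (if 0 < b \<and> b < h then z h b else 0) else 0))"
  proof (intro sum.cong refl)
    fix a b assume "a \<in> {..<r}" "b \<in> {..<r}"
    hence ab: "a < r" "b < r" by auto
    show "(if 2 * co a + 2 * co b = E \<and> s a + c * s b > 0 then 1 else 0) =
       (if 0 < a \<and> a < h then z a b else 0) + (if a = h then (if 0 < b \<and> b < h then z h b else 0) else 0)"
    proof (cases "2 * co a + 2 * co b = E")
      case True
      have "a \<noteq> 0"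
      proof
        assume "a = 0" thus False using True co0 cob[of b] E by simp
      qed
      thus ?thesis using key[OF ab True] True h by (auto simp: z_def)
    next
      case False
      thus ?thesis by (auto simp: z_def)
    qed
  qed
  also have "\<dots> = (\<Sum>a<r. if 0 < a \<and> a < h then (\<Sum>b<r. z a b) else 0) + (\<Sum>a<r. if a = h then (\<Sum>b<r. if 0 < b \<and> b < h then z h b else 0) else 0)"
    by (simp add: sum.distrib sum_if_const)
  also have "(\<Sum>a<r. if a = h then (\<Sum>b<r. if 0 < b \<and> b < h then z h b else 0) else 0) = (\<Sum>b<r. if 0 < b \<and> b < h then z b h else 0)"
    using h by (simp add: r_def) (rule sum.cong, auto simp: z_def add.commute)
  also have "(\<Sum>a<r. if 0 < a \<and> a < h then (\<Sum>b<r. z a b) else 0) = (\<Sum>a<r. if 0 < a \<and> a < h then z a h + 2 * (\<Sum>b\<in>{1..<h}. z a b) else 0)"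
  proof (intro sum.cong refl)
    fix a
    have "(\<Sum>b<r. z a b) = z a 0 + z a h + 2 * (\<Sum>b\<in>{1..<h}. z a b)"
      unfolding r_def
    proof (rule sym_sum1[OF h])
      fix b assume "0 < b" "b < 2*h"
      thus "z a (2*h - b) = z a b" using cos_sym0[OF h, of b] by (simp add: z_def co_def)
    qed
    thus "(if 0 < a \<and> a < h then (\<Sum>b<r. z a b) else 0) = (if 0 < a \<and> a < h then z a h + 2 * (\<Sum>b\<in>{1..<h}. z a b) else 0)"
      by (simp add: z0)
  qed
  also have "(\<Sum>a<r. if 0 < a \<and> a < h then z a h + 2 * (\<Sum>b\<in>{1..<h}. z a b) else 0) =
    (\<Sum>a<r. if 0 < a \<and> a < h then z a h else 0) + 2 * (\<Sum>a<r. if 0 < a \<and> a < h then (\<Sum>b\<in>{1..<h}. z a b) else 0)"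
    by (rule sum_if_split)
  finally have "(\<Sum>i<r*r. if gg r 0 0 i = E \<and> Dv r 0 1 c i < 0 then 1 else 0 :: nat) =
     (\<Sum>a<r. if 0 < a \<and> a < h then z a h else 0) + 2 * (\<Sum>a<r. if 0 < a \<and> a < h then (\<Sum>b\<in>{1..<h}. z a b) else 0) + (\<Sum>b<r. if 0 < b \<and> b < h then z b h else 0)" .
  hence "(\<Sum>i<r*r. if gg r 0 0 i = E \<and> Dv r 0 1 c i < 0 then 1 else 0 :: nat) =
     2 * ((\<Sum>a<r. if 0 < a \<and> a < h then z a h else 0) + (\<Sum>a<r. if 0 < a \<and> a < h then (\<Sum>b\<in>{1..<h}. z a b) else 0))"
    by (rule aux2)
  hence E2: "even (\<Sum>i<r*r. if gg r 0 0 i = E \<and> Dv r 0 1 c i < 0 then 1 else 0 :: nat)"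
    by (simp only: dvd_triv_left)
  show "even (\<Sum>i<(2*h)*(2*h). if gg (2*h) 0 0 i = E \<and> Dv (2*h) 0 1 c i < 0 then 1 else 0 :: nat)"
    using E2 unfolding r_def .
qed


lemma paritypp:
  fixes h :: nat and E c :: real
  assumes h: "h > 0" and c: "c > 0"
    and cs: "\<And>a. a < 2*h \<Longrightarrow> c < \<bar>sin (al (2*h) pi a)\<bar>"
  shows "\<forall>i<(2*h)*(2*h). Dv (2*h) pi (-1) c i \<noteq> 0"
    and "even (\<Sum>i<(2*h)*(2*h). if gg (2*h) pi pi i = E \<and> Dv (2*h) pi (-1) c i < 0 then 1 else 0 :: nat)"
proof -
  define r where "r = 2*h"
  have r0: "r > 0" using h by (simp add: r_def)
  define s where "s a = sin (al r pi a)" for a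
  define co where "co a = cos (al r pi a)" for a
  have sb: "\<bar>s b\<bar> \<le> 1" for b by (simp add: s_def)
  have sne: "a < r \<Longrightarrow> s a \<noteq> 0" for a using sin_pi_pos_iff(2)[OF h] by (simp add: r_def s_def al_def)
  have spos: "a < r \<Longrightarrow> s a > 0 \<longleftrightarrow> a < h" for a using sin_pi_pos_iff(1)[OF h] by (simp add: r_def s_def al_def)
  have cs': "a < r \<Longrightarrow> c < \<bar>s a\<bar>" for a using cs by (simp add: r_def s_def)
  have Dv_eq: "Dv r pi (-1) c i = (2 / real r) * (s (i div r) + c * s (i mod r))" for i
    by (simp add: Dv_def s_def)
  have pos: "2 / real r > 0" using r0 by simp
  have key: "s a + c * s b \<noteq> 0 \<and> (s a + c * s b < 0 \<longleftrightarrow> h \<le> a)" if ab: "a < r" "b < r" for a b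
    using sign_lemma[OF sne[OF ab(1)] cs'[OF ab(1)] c sb[of b]] spos[OF ab(1)] by force
  show "\<forall>i<(2*h)*(2*h). Dv (2*h) pi (-1) c i \<noteq> 0"
  proof (intro allI impI)
    fix i assume i: "i < (2*h)*(2*h)"
    have "i div r < r" "i mod r < r" using i by (simp_all add: r_def divr modr)
    thus "Dv (2*h) pi (-1) c i \<noteq> 0" using key[of "i div r" "i mod r"] pos
      unfolding r_def[symmetric] Dv_eq by auto
  qed
  have Dv_lt: "Dv r pi (-1) c i < 0 \<longleftrightarrow> s (i div r) + c * s (i mod r) < 0" for i
    unfolding Dv_eq using pos by (simp only: mult_less_0_iff) auto
  have gg_eq: "gg r pi pi i = 2 * co (i div r) + 2 * co (i mod r)" for i
    by (simp add: gg_def ev_def co_def)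
  define z where "z a b = (if 2 * co a + 2 * co b = E then 1 else 0 :: nat)" for a b
  have "(\<Sum>i<r*r. if gg r pi pi i = E \<and> Dv r pi (-1) c i < 0 then 1 else 0 :: nat) =
     (\<Sum>i<r*r. (\<lambda>a b. if 2 * co a + 2 * co b = E \<and> s a + c * s b < 0 then 1 else 0 :: nat) (i div r) (i mod r))"
    by (simp add: gg_eq Dv_lt)
  also have "\<dots> = (\<Sum>a<r. \<Sum>b<r. if 2 * co a + 2 * co b = E \<and> s a + c * s b < 0 then 1 else 0)"
    by (rule sum_divmod)
  also have "\<dots> = (\<Sum>a<r. if h \<le> a then (\<Sum>b<r. z a b) else 0)"
  proof (intro sum.cong refl)
    fix a assume "a \<in> {..<r}"
    hence a: "a < r" by auto
    have "(\<Sum>b<r. if 2 * co a + 2 * co b = E \<and> s a + c * s b < 0 then 1 else 0) = (\<Sum>b<r. if h \<le> a then z a b else 0)"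
      by (rule sum.cong) (use key[OF a] in \<open>auto simp: z_def\<close>)
    thus "(\<Sum>b<r. if 2 * co a + 2 * co b = E \<and> s a + c * s b < 0 then 1 else 0) = (if h \<le> a then (\<Sum>b<r. z a b) else 0)"
      by (simp add: sum_if_const)
  qed
  also have "\<dots> = (\<Sum>a<r. if h \<le> a then 2 * (\<Sum>b<h. z a b) else 0)"
  proof (intro sum.cong refl)
    fix a
    have "(\<Sum>b<r. z a b) = 2 * (\<Sum>b<h. z a b)" unfolding r_def
    proof (rule sym_sum2)
      fix b assume "b < 2*h"
      thus "z a (2*h - 1 - b) = z a b" using cos_symp[OF h, of b] by (simp add: z_def co_def al_def r_def)
    qed
    thus "(if h \<le> a then (\<Sum>b<r. z a b) else 0) = (if h \<le> a then 2 * (\<Sum>b<h. z a b) else 0)" by simp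
  qed
  also have "\<dots> = 2 * (\<Sum>a<r. if h \<le> a then (\<Sum>b<h. z a b) else 0)"
    unfolding sum_distrib_left by (rule sum.cong) (auto simp: sum_distrib_left)
  finally have E2: "even (\<Sum>i<r*r. if gg r pi pi i = E \<and> Dv r pi (-1) c i < 0 then 1 else 0 :: nat)"
    by (simp only: dvd_triv_left)
  show "even (\<Sum>i<(2*h)*(2*h). if gg (2*h) pi pi i = E \<and> Dv (2*h) pi (-1) c i < 0 then 1 else 0 :: nat)"
    using E2 unfolding r_def .
qed



lemma cnt_eq_from:
  assumes r: "r \<ge> 2" and l1: "l \<le> r*r"
    and lo: "l = 0 \<or> lamG r l \<theta> \<phi> < ereal E"
    and hi: "\<forall>k. l < k \<and> k \<le> r*r \<longrightarrow> \<not> lamG r k \<theta> \<phi> < ereal E"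
  shows "l = cnt (r*r) (gg r \<theta> \<phi>) E"
proof -
  have "l \<le> cnt (r*r) (gg r \<theta> \<phi>) E"
    using lo lam_lt[OF r _ l1] by (cases "l = 0") auto
  moreover have "\<not> cnt (r*r) (gg r \<theta> \<phi>) E > l"
  proof
    assume gt: "cnt (r*r) (gg r \<theta> \<phi>) E > l"
    let ?k = "cnt (r*r) (gg r \<theta> \<phi>) E"
    have "?k \<le> r*r" by (rule cnt_le)
    hence "lamG r ?k \<theta> \<phi> < ereal E" using lam_lt[OF r, of ?k] gt by simp
    thus False using hi gt \<open>?k \<le> r*r\<close> by blast
  qed
  ultimately show ?thesis by simp
qed

theorem mainTheorem8:
  fixes r l m :: nat and E :: real
  assumes "r > 0" and "even r"
    and "E \<in> C_Gamma r" and "E \<notin> {-4, 0, 4}" and "E < 0"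
    and "l \<ge> 1" and "l \<le> r^2" and "lamG r l 0 0 < ereal E"
    and "\<forall>k. l < k \<and> k \<le> r^2 \<longrightarrow> \<not> lamG r k 0 0 < ereal E"
    and "m \<le> r^2" and "lamG r m pi pi < ereal E"
    and "\<forall>k. m < k \<and> k \<le> r^2 \<longrightarrow> \<not> lamG r k pi pi < ereal E"
  shows "\<exists>\<theta>1 \<phi>1 \<theta>2 \<phi>2 :: real. \<exists>n1 n2 :: nat.
     \<theta>1 \<in> {0..pi} \<and> \<phi>1 \<in> {0..pi} \<and> \<theta>2 \<in> {0..pi} \<and> \<phi>2 \<in> {0..pi} \<and>
     l + 2*n1 + 1 \<le> r^2 \<and> m + 2*n2 + 1 \<le> r^2 \<and>
     lamG r (l + 2*n1) \<theta>1 \<phi>1 < ereal E \<and> ereal E < lamG r (l + 2*n1 + 1) \<theta>1 \<phi>1 \<and>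
     lamG r (m + 2*n2) \<theta>2 \<phi>2 < ereal E \<and> ereal E < lamG r (m + 2*n2 + 1) \<theta>2 \<phi>2"
proof -
  note A = assms
  obtain h where rh: "r = 2*h" using A(2) by blast
  have h: "h > 0" using A(1) rh by simp
  have r2: "r \<ge> 2" using h rh by simp
  have rsq: "r^2 = r*r" by (simp add: power2_eq_square)
  have E4: "E \<noteq> -4" "E \<noteq> 0" "E \<noteq> 4" using A(4) by auto
  define SA where "SA = (\<lambda>a. \<bar>sin (al r 0 a)\<bar>) ` {a. a < r \<and> sin (al r 0 a) \<noteq> 0} \<union> (\<lambda>a. \<bar>sin (al r pi a)\<bar>) ` {a. a < r}"
  have "finite SA" by (simp add: SA_def)
  moreover have "\<forall>x\<in>SA. x > 0"
    using sin_pi_pos_iff(2)[OF h] by (auto simp: SA_def rh al_def)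
  ultimately obtain c where c: "c > 0" "c < 1" "\<forall>x\<in>SA. c < x" using small_c by blast
  have cs0: "\<And>a. a < 2*h \<Longrightarrow> sin (al (2*h) 0 a) \<noteq> 0 \<Longrightarrow> c < \<bar>sin (al (2*h) 0 a)\<bar>"
    using c(3) by (auto simp: SA_def rh)
  have csp: "\<And>a. a < 2*h \<Longrightarrow> c < \<bar>sin (al (2*h) pi a)\<bar>"
    using c(3) by (auto simp: SA_def rh)
  have l_eq: "l = cnt (r*r) (gg r 0 0) E"
    by (rule cnt_eq_from[OF r2]) (use A(7,8,9) in \<open>auto simp: rsq\<close>)
  have m_eq: "m = cnt (r*r) (gg r pi pi) E"
    by (rule cnt_eq_from[OF r2]) (use A(10,11,12) in \<open>auto simp: rsq\<close>)
  have nz1: "\<And>i. i < r*r \<Longrightarrow> gg r 0 0 i = E \<Longrightarrow> Dv r 0 1 c i \<noteq> 0"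
    using parity00(1)[OF h A(5) E4 c(1) cs0] rh by auto
  have pd: "pi / 2 > 0" by simp
  obtain t1 where t1: "0 < t1" "t1 < pi/2"
    and ne1: "\<forall>i<r*r. gg r (0 + 1*t1) (0 + 1*c*t1) i \<noteq> E"
    and cnt1: "cnt (r*r) (gg r (0 + 1*t1) (0 + 1*c*t1)) E = cnt (r*r) (gg r 0 0) E +
       (\<Sum>i<r*r. if gg r 0 0 i = E \<and> Dv r 0 1 c i < 0 then 1 else 0)"
    and lt1: "E < gg r 0 0 0 \<longrightarrow> cnt (r*r) (gg r (0 + 1*t1) (0 + 1*c*t1)) E < r*r"
    using pert_count[OF r2 pd nz1] by blast
  have "even (\<Sum>i<r*r. if gg r 0 0 i = E \<and> Dv r 0 1 c i < 0 then 1 else 0 :: nat)"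
    using parity00(2)[OF h A(5) E4 c(1) cs0] rh by simp
  then obtain n1 where n1: "(\<Sum>i<r*r. if gg r 0 0 i = E \<and> Dv r 0 1 c i < 0 then 1 else 0 :: nat) = 2*n1"
    by blast
  have g00: "gg r 0 0 0 = 4" by (simp add: gg_def ev_def al_def)
  have c1: "cnt (r*r) (gg r t1 (c*t1)) E = l + 2*n1" using cnt1 n1 l_eq by simp
  have c1lt: "cnt (r*r) (gg r t1 (c*t1)) E < r*r" using lt1 g00 A(5) by simp
  have ne1': "\<forall>i<r*r. gg r t1 (c*t1) i \<noteq> E" using ne1 by simp
  have nz2: "\<And>i. i < r*r \<Longrightarrow> gg r pi pi i = E \<Longrightarrow> Dv r pi (-1) c i \<noteq> 0"
    using paritypp(1)[OF h c(1) csp] rh by auto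
  obtain t2 where t2: "0 < t2" "t2 < pi/2"
    and ne2: "\<forall>i<r*r. gg r (pi + (-1)*t2) (pi + (-1)*c*t2) i \<noteq> E"
    and cnt2: "cnt (r*r) (gg r (pi + (-1)*t2) (pi + (-1)*c*t2)) E = cnt (r*r) (gg r pi pi) E +
       (\<Sum>i<r*r. if gg r pi pi i = E \<and> Dv r pi (-1) c i < 0 then 1 else 0)"
    and lt2: "E < gg r pi pi 0 \<longrightarrow> cnt (r*r) (gg r (pi + (-1)*t2) (pi + (-1)*c*t2)) E < r*r"
    using pert_count[OF r2 pd nz2] by blast
  have "even (\<Sum>i<r*r. if gg r pi pi i = E \<and> Dv r pi (-1) c i < 0 then 1 else 0 :: nat)"
    using paritypp(2)[OF h c(1) csp] rh by simp
  then obtain n2 where n2: "(\<Sum>i<r*r. if gg r pi pi i = E \<and> Dv r pi (-1) c i < 0 then 1 else 0 :: nat) = 2*n2"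
    by blast
  have gpp: "gg r pi pi 0 \<ge> 0"
  proof -
    have "0 \<le> pi / real r" by simp
    moreover have "pi / real r \<le> pi / 2" using r2 by (intro divide_left_mono) auto
    ultimately have "cos (pi / real r) \<ge> 0" by (intro cos_ge_zero) (auto intro: order.trans[of _ 0])
    thus ?thesis by (simp add: gg_def ev_def al_def)
  qed
  have c2: "cnt (r*r) (gg r (pi - t2) (pi - c*t2)) E = m + 2*n2" using cnt2 n2 m_eq by simp
  have c2lt: "cnt (r*r) (gg r (pi - t2) (pi - c*t2)) E < r*r" using lt2 gpp A(5) by simp
  have ne2': "\<forall>i<r*r. gg r (pi - t2) (pi - c*t2) i \<noteq> E" using ne2 by simp
  have ct1: "c * t1 \<le> t1" "c * t2 \<le> t2" using c t1 t2 by (simp_all add: mult_left_le_one_le)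
  have rng: "t1 \<in> {0..pi}" "c*t1 \<in> {0..pi}" "pi - t2 \<in> {0..pi}" "pi - c*t2 \<in> {0..pi}"
    using t1 t2 ct1 c(1) by (auto intro: order.trans[of _ t1] order.trans[of _ t2])
  have L1: "lamG r (l + 2*n1) t1 (c*t1) < ereal E"
    using lam_lt[OF r2, of "l + 2*n1" t1 "c*t1" E] c1 c1lt A(6) by simp
  have L2: "ereal E < lamG r (l + 2*n1 + 1) t1 (c*t1)"
    using lam_gt[OF r2, of "l + 2*n1 + 1" t1 "c*t1" E] c1 c1lt ne1' by simp
  have M1: "lamG r (m + 2*n2) (pi - t2) (pi - c*t2) < ereal E"
  proof (cases "m + 2*n2 = 0")
    case True thus ?thesis by (simp add: lamG_def)
  next
    case False
    hence "1 \<le> m + 2*n2" by arith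
    thus ?thesis using lam_lt[OF r2, of "m + 2*n2" "pi - t2" "pi - c*t2" E] c2 c2lt by simp
  qed
  have M2: "ereal E < lamG r (m + 2*n2 + 1) (pi - t2) (pi - c*t2)"
    using lam_gt[OF r2, of "m + 2*n2 + 1" "pi - t2" "pi - c*t2" E] c2 c2lt ne2' by simp
  have B: "l + 2*n1 + 1 \<le> r^2" "m + 2*n2 + 1 \<le> r^2" using c1 c1lt c2 c2lt rsq by auto
  show ?thesis
    by (rule exI[of _ t1], rule exI[of _ "c*t1"], rule exI[of _ "pi - t2"], rule exI[of _ "pi - c*t2"],
        rule exI[of _ n1], rule exI[of _ n2]) (use rng B L1 L2 M1 M2 in auto)
qed


end
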